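(* Let $(\mathcal{G}(u_0,v_0),-\Omega^2\,du\,dv)$ with radial function $r$ and stress-energy components $T_{uu},T_{uv},T_{vv}$ be as described in the context, satisfying assumptions (I)–(VII), and suppose there is $\delta>0$ such that, with $\mathcal{W}=\mathcal{W}(\delta)$, condition (A), $T_{uv}\Omega^{-2}<\frac1{4r^2}$, holds on $\mathcal{A}\cap\mathcal{W}$. If $\mathcal{A}\cap\mathcal{W}\neq\emptyset$, then $\mathcal{A}\cap\mathcal{W}$ is connected and terminates (i.e. its future limit point in $\overline{K}(u_0,v_0)$ lies) either at $i^+=(0,\infty)$, in which case it is asymptotic to the event horizon, or on the Cauchy horizon $(0,u_0]\times\{\infty\}\subset\overline{K}(u_0,v_0)$. In the latter case, $\mathcal{W}\cap\mathcal{R}$ contains a rectangle $K(u_1,v_1)=[0,u_1]\times[v_1,\infty)$ for some $u_1\in(0,u_0]$, $v_1\in[v_0,\infty)$.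
   Context: Fix double null coordinates $(u,v)$ on $\mathbb{R}^2$ with Minkowski metric $-du\,dv$, time-oriented so that $u,v$ increase toward the future. For $u,v>0$, $K(u,v)=[0,u]\times[v,\infty)$; $\overline{K}(u_0,v_0)=[0,u_0]\times[v_0,\infty]$. Fix $u_0,v_0>0$, $\mathcal{C}_{in}=[0,u_0]\times\{v_0\}$, $\mathcal{C}_{out}=\{0\}\times[v_0,\infty)$ (the event horizon); causal notions refer to $K(u_0,v_0)$. Let $\mathcal{G}(u_0,v_0)\subset K(u_0,v_0)$ be globally hyperbolic, relatively open, containing $\mathcal{C}_{in}\cup\mathcal{C}_{out}$, with metric $-\Omega^2du\,dv$ ($\Omega>0$ smooth), smooth $r\ge0$ with $r>0$ on $\mathcal{C}_{in}\cup\mathcal{C}_{out}$, and smooth $T_{uu},T_{uv},T_{vv}$ (stress-energy components of the spherically symmetric spacetime $-\Omega^2du\,dv+r^2g_{S^2}$) satisfying $\partial_u(\Omega^{-2}\partial_u r)=-r\Omega^{-2}T_{uu}$, $\partial_v(\Omega^{-2}\partial_v r)=-r\Omega^{-2}T_{vv}$, $\partial_u m=2r^2\Omega^{-2}(T_{uv}\partial_u r-T_{uu}\partial_v r)$, $\partial_v m=2r^2\Omega^{-2}(T_{uv}\partial_v r-T_{vv}\partial_u r)$, with $m=\frac r2(1+4\Omega^{-2}\partial_u r\partial_v r)$. Define $\mathcal{R}=\{\partial_v r>0,\partial_u r<0\}$, $\mathcal{T}=\{\partial_v r<0,\partial_u r<0\}$, $\mathcal{A}=\{\partial_v r=0,\partial_u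 r<0\}$, $r_+=\sup_{\mathcal{C}_{out}}r$, $m_+=\sup_{\mathcal{C}_{out}}m$, $\mathcal{W}(\delta)=\{(u,v)\in\mathcal{G}(u_0,v_0):r\ge r_+-\delta\}$. Assumptions: (I) $T_{uu},T_{uv},T_{vv}\ge0$; (II) $J^-(\mathcal{G}(u_0,v_0))\subset\mathcal{G}(u_0,v_0)$; (III) $r\le r_+<\infty$ on $\mathcal{C}_{out}$; (IV) $0\le m\le m_+<\infty$ on $\mathcal{C}_{out}$; (V) $\partial_u r<0$ on $\mathcal{C}_{out}$; (VI) $\partial_v r>0$ on $\mathcal{C}_{out}$; (VII) (closures in $K(u_0,v_0)$) if $p\in\overline{\mathcal{R}}$, $q\in\overline{\mathcal{R}}\cap I^-(p)$, $J^-(p)\cap J^+(q)\setminus\{p\}\subset\mathcal{R}\cup\mathcal{A}$, then $p\in\mathcal{R}\cup\mathcal{A}$. A subset of $\mathcal{A}$ is asymptotic to the event horizon if $i^+=(0,\infty)$ is a limit point of it in $\overline{K}(u_0,v_0)$. *)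

theory Defs
  imports "HOL-Analysis.Analysis"
begin

text \<open>Points of the quotient spacetime are pairs (u,v) of double null coordinates.\<close>

type_synonym pt = "real \<times> real"

definition Krect :: "real \<Rightarrow> real \<Rightarrow> pt set" where
  "Krect u v = {p. 0 \<le> fst p \<and> fst p \<le> u \<and> v \<le> snd p}"

text \<open>Causal / chronological past and future in K(u0,v0) (Minkowski metric -du dv,
  u and v increasing to the future; K is a product of intervals, so causal curves in K
  between two points exist iff the coordinates are ordered).\<close>
definition J_minus :: "real \<Rightarrow> real \<Rightarrow> pt \<Rightarrow> pt set" where
  "J_minus u0 v0 p = {q \<in> Krect u0 v0. fst q \<le> fst p \<and> snd q \<le> snd p}"

definition J_plus :: "real \<Rightarrow> real \<Rightarrow> pt \<Rightarrow> pt set" where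
  "J_plus u0 v0 p = {q \<in> Krect u0 v0. fst p \<le> fst q \<and> snd p \<le> snd q}"

definition I_minus :: "real \<Rightarrow> real \<Rightarrow> pt \<Rightarrow> pt set" where
  "I_minus u0 v0 p = {q \<in> Krect u0 v0. fst q < fst p \<and> snd q < snd p}"

definition causal_curve_in :: "pt set \<Rightarrow> (real \<Rightarrow> pt) \<Rightarrow> bool" where
  "causal_curve_in S \<gamma> \<longleftrightarrow> path \<gamma> \<and> path_image \<gamma> \<subseteq> S \<and>
     (\<forall>s t. 0 \<le> s \<longrightarrow> s \<le> t \<longrightarrow> t \<le> 1 \<longrightarrow>
        fst (\<gamma> s) \<le> fst (\<gamma> t) \<and> snd (\<gamma> s) \<le> snd (\<gamma> t))"

definition causal_le_in :: "pt set \<Rightarrow> pt \<Rightarrow> pt \<Rightarrow> bool" where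
  "causal_le_in S p q \<longleftrightarrow>
     (\<exists>\<gamma>. causal_curve_in S \<gamma> \<and> pathstart \<gamma> = p \<and> pathfinish \<gamma> = q)"

text \<open>Global hyperbolicity (causality is automatic for this causal structure, as
  causal curves are monotone): all causal diamonds are compact.\<close>
definition globally_hyperbolic :: "pt set \<Rightarrow> bool" where
  "globally_hyperbolic S \<longleftrightarrow>
     (\<forall>p\<in>S. \<forall>q\<in>S. compact {x. causal_le_in S p x \<and> causal_le_in S x q})"

definition pu :: "(pt \<Rightarrow> real) \<Rightarrow> pt \<Rightarrow> real" where
  "pu f p = deriv (\<lambda>s. f (s, snd p)) (fst p)"

definition pv :: "(pt \<Rightarrow> real) \<Rightarrow> pt \<Rightarrow> real" where
  "pv f p = deriv (\<lambda>t. f (fst p, t)) (snd p)"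

primrec pd :: "bool list \<Rightarrow> (pt \<Rightarrow> real) \<Rightarrow> pt \<Rightarrow> real" where
  "pd [] f = f"
| "pd (b # bs) f = (if b then pu (pd bs f) else pv (pd bs f))"

definition C_inf_on :: "pt set \<Rightarrow> (pt \<Rightarrow> real) \<Rightarrow> bool" where
  "C_inf_on U f \<longleftrightarrow> open U \<and>
     (\<forall>bs. continuous_on U (pd bs f) \<and>
        (\<forall>p\<in>U. (\<lambda>s. pd bs f (s, snd p)) differentiable (at (fst p)) \<and>
               (\<lambda>t. pd bs f (fst p, t)) differentiable (at (snd p))))"

text \<open>Smooth on an arbitrary (e.g. relatively open, with boundary) set: smooth on an
  open neighbourhood of it.\<close>
definition smooth_on :: "pt set \<Rightarrow> (pt \<Rightarrow> real) \<Rightarrow> bool" where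
  "smooth_on G f \<longleftrightarrow> (\<exists>U. G \<subseteq> U \<and> C_inf_on U f)"

definition hawking_mass :: "(pt \<Rightarrow> real) \<Rightarrow> (pt \<Rightarrow> real) \<Rightarrow> pt \<Rightarrow> real" where
  "hawking_mass \<Omega> r p = r p / 2 * (1 + 4 / (\<Omega> p)^2 * pu r p * pv r p)"

definition C_in :: "real \<Rightarrow> real \<Rightarrow> pt set" where
  "C_in u0 v0 = {p. 0 \<le> fst p \<and> fst p \<le> u0 \<and> snd p = v0}"

definition C_out :: "real \<Rightarrow> pt set" where
  "C_out v0 = {p. fst p = 0 \<and> v0 \<le> snd p}"

definition regR :: "pt set \<Rightarrow> (pt \<Rightarrow> real) \<Rightarrow> pt set" where
  "regR G r = {p \<in> G. pv r p > 0 \<and> pu r p < 0}"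

definition regT :: "pt set \<Rightarrow> (pt \<Rightarrow> real) \<Rightarrow> pt set" where
  "regT G r = {p \<in> G. pv r p < 0 \<and> pu r p < 0}"

definition regA :: "pt set \<Rightarrow> (pt \<Rightarrow> real) \<Rightarrow> pt set" where
  "regA G r = {p \<in> G. pv r p = 0 \<and> pu r p < 0}"

definition W_set :: "pt set \<Rightarrow> (pt \<Rightarrow> real) \<Rightarrow> real \<Rightarrow> real \<Rightarrow> pt set" where
  "W_set G r rplus \<delta> = {p \<in> G. r p \<ge> rplus - \<delta>}"

text \<open>A subset S of K(u0,v0) terminates (its future limit point in the compactification
  [0,u0] x [v0,infinity] lies) at the point (ustar, infinity): S reaches v = infinity and
  for large v its points converge to u = ustar.\<close>
definition terminates_at :: "pt set \<Rightarrow> real \<Rightarrow> bool" where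
  "terminates_at S ustar \<longleftrightarrow>
     (\<forall>V. \<exists>p\<in>S. snd p \<ge> V) \<and>
     (\<forall>\<epsilon>>0. \<exists>V. \<forall>p\<in>S. snd p \<ge> V \<longrightarrow> \<bar>fst p - ustar\<bar> < \<epsilon>)"

text \<open>i+ = (0,infinity) is a limit point of S in [0,u0] x [v0,infinity].\<close>
definition asymptotic_to_EH :: "pt set \<Rightarrow> bool" where
  "asymptotic_to_EH S \<longleftrightarrow> (\<forall>\<epsilon>>0. \<forall>V. \<exists>p\<in>S. fst p < \<epsilon> \<and> snd p > V)"

end

theory Submission
  imports Defs
begin



lemma Cinf_du:
  assumes "C_inf_on U f" "p \<in> U"
  shows "((\<lambda>s. pd bs f (s, snd p)) has_real_derivative pu (pd bs f) p) (at (fst p))"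
  using assms unfolding C_inf_on_def pu_def by (simp add: DERIV_deriv_iff_real_differentiable)

lemma Cinf_dv:
  assumes "C_inf_on U f" "p \<in> U"
  shows "((\<lambda>t. pd bs f (fst p, t)) has_real_derivative pv (pd bs f) p) (at (snd p))"
  using assms unfolding C_inf_on_def pv_def by (simp add: DERIV_deriv_iff_real_differentiable)

lemma Cinf_isCont:
  assumes "C_inf_on U f" "p \<in> U"
  shows "isCont (pd bs f) p"
  using assms unfolding C_inf_on_def by (meson continuous_on_eq_continuous_at)

lemma Cinf_du0: "C_inf_on U f \<Longrightarrow> (u,v) \<in> U \<Longrightarrow> ((\<lambda>s. f (s, v)) has_real_derivative pu f (u,v)) (at u)"
  using Cinf_du[of U f "(u,v)" "[]"] by simp
lemma Cinf_dv0: "C_inf_on U f \<Longrightarrow> (u,v) \<in> U \<Longrightarrow> ((\<lambda>t. f (u, t)) has_real_derivative pv f (u,v)) (at v)"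
  using Cinf_dv[of U f "(u,v)" "[]"] by simp
lemma Cinf_du1: "C_inf_on U f \<Longrightarrow> (u,v) \<in> U \<Longrightarrow> ((\<lambda>s. pu f (s, v)) has_real_derivative pu (pu f) (u,v)) (at u)"
  using Cinf_du[of U f "(u,v)" "[True]"] by simp
lemma Cinf_du2: "C_inf_on U f \<Longrightarrow> (u,v) \<in> U \<Longrightarrow> ((\<lambda>s. pv f (s, v)) has_real_derivative pu (pv f) (u,v)) (at u)"
  using Cinf_du[of U f "(u,v)" "[False]"] by simp
lemma Cinf_dv1: "C_inf_on U f \<Longrightarrow> (u,v) \<in> U \<Longrightarrow> ((\<lambda>t. pv f (u, t)) has_real_derivative pv (pv f) (u,v)) (at v)"
  using Cinf_dv[of U f "(u,v)" "[False]"] by simp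
lemma Cinf_cont0: "C_inf_on U f \<Longrightarrow> p \<in> U \<Longrightarrow> isCont f p"
  using Cinf_isCont[of U f p "[]"] by simp
lemma Cinf_contu: "C_inf_on U f \<Longrightarrow> p \<in> U \<Longrightarrow> isCont (pu f) p"
  using Cinf_isCont[of U f p "[True]"] by simp
lemma Cinf_contv: "C_inf_on U f \<Longrightarrow> p \<in> U \<Longrightarrow> isCont (pv f) p"
  using Cinf_isCont[of U f p "[False]"] by simp

lemma quot_deriv:
  assumes "(f has_real_derivative a) (at x)" "(g has_real_derivative b) (at x)" "g x \<noteq> 0"
  shows "((\<lambda>s. f s / (g s)^2) has_real_derivative deriv (\<lambda>s. f s / (g s)^2) x) (at x)"
proof -
  have "\<exists>y. ((\<lambda>s. f s / (g s)^2) has_real_derivative y) (at x)"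
    using DERIV_divide[OF assms(1) DERIV_power[OF assms(2), of 2]] assms(3) by auto
  then show ?thesis using DERIV_imp_deriv by metis
qed

lemma dist_u: "dist (a::real, b::real) (c, b) = \<bar>a - c\<bar>"
  by (simp add: dist_Pair_Pair dist_real_def)
lemma dist_v: "dist (a::real, b::real) (a, c) = \<bar>b - c\<bar>"
  by (simp add: dist_Pair_Pair dist_real_def)

lemma isCont_u: "isCont f (u,v) \<Longrightarrow> isCont (\<lambda>s. f (s, v)) u"
  by (rule continuous_at_compose[of _ "\<lambda>s. (s, v)", unfolded o_def, simplified]) (auto intro!: continuous_intros)
lemma isCont_v: "isCont f (u,v) \<Longrightarrow> isCont (\<lambda>t. f (u, t)) v"
  by (rule continuous_at_compose[of _ "\<lambda>t. (u, t)", unfolded o_def, simplified]) (auto intro!: continuous_intros)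




locale setting =
  fixes u0 v0 :: real and G U :: "pt set" and \<Omega> r Tuu Tuv Tvv :: "pt \<Rightarrow> real" and \<rho> \<delta> :: real
  assumes G_sub: "G \<subseteq> Krect u0 v0"
    and G_open: "openin (top_of_set (Krect u0 v0)) G"
    and G_cont: "C_out v0 \<subseteq> G"
    and GU: "G \<subseteq> U" and CO: "C_inf_on U \<Omega>" and CR: "C_inf_on U r"
    and \<Omega>_pos: "\<forall>p\<in>G. \<Omega> p > 0"
    and r_nonneg: "\<forall>p\<in>G. r p \<ge> 0"
    and eq_uu: "\<forall>p\<in>G. pu (\<lambda>q. pu r q / (\<Omega> q)^2) p = - r p * Tuu p / (\<Omega> p)^2"
    and eq_vv: "\<forall>p\<in>G. pv (\<lambda>q. pv r q / (\<Omega> q)^2) p = - r p * Tvv p / (\<Omega> p)^2"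
    and eq_mu: "\<forall>p\<in>G. pu (hawking_mass \<Omega> r) p
                   = 2 * (r p)^2 / (\<Omega> p)^2 * (Tuv p * pu r p - Tuu p * pv r p)"
    and I: "\<forall>p\<in>G. Tuu p \<ge> 0 \<and> Tuv p \<ge> 0 \<and> Tvv p \<ge> 0"
    and II: "\<forall>p\<in>G. J_minus u0 v0 p \<subseteq> G"
    and V: "\<forall>p\<in>C_out v0. pu r p < 0"
    and VI: "\<forall>p\<in>C_out v0. pv r p > 0"
    and VII: "\<forall>p q. p \<in> closure (regR G r) \<inter> Krect u0 v0 \<longrightarrow>
                   q \<in> closure (regR G r) \<inter> Krect u0 v0 \<inter> I_minus u0 v0 p \<longrightarrow>
                   (J_minus u0 v0 p \<inter> J_plus u0 v0 q) - {p} \<subseteq> regR G r \<union> regA G r \<longrightarrow>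
                   p \<in> regR G r \<union> regA G r"
    and A_cond: "\<forall>p\<in>regA G r \<inter> W_set G r \<rho> \<delta>. Tuv p / (\<Omega> p)^2 < 1 / (4 * (r p)^2)"
begin

lemma U_open: "open U" using CR unfolding C_inf_on_def by simp

lemma inK: "(u,v) \<in> G \<Longrightarrow> 0 \<le> u \<and> u \<le> u0 \<and> v0 \<le> v"
  using G_sub unfolding Krect_def by auto

lemma seg: "(u,v) \<in> G \<Longrightarrow> 0 \<le> s \<Longrightarrow> s \<le> u \<Longrightarrow> v0 \<le> w \<Longrightarrow> w \<le> v \<Longrightarrow> (s,w) \<in> G"
  using II inK[of u v] unfolding J_minus_def Krect_def by force

lemma inU: "p \<in> G \<Longrightarrow> p \<in> U" using GU by auto

lemma pu_neg: assumes "p \<in> G" shows "pu r p < 0"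
proof -
  obtain u v where p: "p = (u,v)" by force
  have uv: "0 \<le> u" "v0 \<le> v" using inK assms p by auto
  define h where "h = (\<lambda>s. pu r (s,v) / (\<Omega> (s,v))^2)"
  have "h u \<le> h 0"
  proof (rule DERIV_nonpos_imp_nonincreasing[OF uv(1)])
    fix x assume x: "0 \<le> x" "x \<le> u"
    have xG: "(x,v) \<in> G" using seg[of u v x v] assms p x uv by auto
    have "(h has_real_derivative deriv h x) (at x)"
      unfolding h_def
      by (rule quot_deriv[OF Cinf_du1[OF CR inU[OF xG]] Cinf_du0[OF CO inU[OF xG]]])
         (use \<Omega>_pos xG in force)
    moreover have "deriv h x = - r (x,v) * Tuu (x,v) / (\<Omega> (x,v))^2"
      using eq_uu xG unfolding h_def pu_def by auto
    moreover have "- r (x,v) * Tuu (x,v) / (\<Omega> (x,v))^2 \<le> 0"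
      using r_nonneg I xG by (auto intro!: divide_nonpos_nonneg)
    ultimately show "\<exists>y. (h has_real_derivative y) (at x) \<and> y \<le> 0" by auto
  qed
  moreover have "h 0 < 0"
  proof -
    have c: "(0,v) \<in> C_out v0" using uv by (simp add: C_out_def)
    then have "(0,v) \<in> G" using G_cont by auto
    then show ?thesis unfolding h_def using V c \<Omega>_pos by (auto intro!: divide_neg_pos)
  qed
  ultimately have "h u < 0" by simp
  then show ?thesis unfolding h_def p using \<Omega>_pos assms p
    by (smt (verit) divide_nonneg_pos zero_less_power)
qed

lemma k_mono:
  assumes "(u,w) \<in> G" "v0 \<le> v" "v \<le> w"
  shows "pv r (u,w) / (\<Omega> (u,w))^2 \<le> pv r (u,v) / (\<Omega> (u,v))^2"
proof -
  define h where "h = (\<lambda>t. pv r (u,t) / (\<Omega> (u,t))^2)"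
  have "h w \<le> h v"
  proof (rule DERIV_nonpos_imp_nonincreasing[OF assms(3)])
    fix x assume x: "v \<le> x" "x \<le> w"
    have xG: "(u,x) \<in> G" using seg[of u w u x] assms inK x by auto
    have "(h has_real_derivative deriv h x) (at x)"
      unfolding h_def
      by (rule quot_deriv[OF Cinf_dv1[OF CR inU[OF xG]] Cinf_dv0[OF CO inU[OF xG]]])
         (use \<Omega>_pos xG in force)
    moreover have "deriv h x = - r (u,x) * Tvv (u,x) / (\<Omega> (u,x))^2"
      using eq_vv xG unfolding h_def pv_def by auto
    moreover have "- r (u,x) * Tvv (u,x) / (\<Omega> (u,x))^2 \<le> 0"
      using r_nonneg I xG by (auto intro!: divide_nonpos_nonneg)
    ultimately show "\<exists>y. (h has_real_derivative y) (at x) \<and> y \<le> 0" by auto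
  qed
  then show ?thesis unfolding h_def .
qed

lemma pv_later_nonpos:
  assumes "(u,w) \<in> G" "v0 \<le> v" "v \<le> w" "pv r (u,v) \<le> 0"
  shows "pv r (u,w) \<le> 0"
proof -
  have vG: "(u,v) \<in> G" using seg[of u w u v] assms inK by auto
  have "pv r (u,v) / (\<Omega> (u,v))^2 \<le> 0" using assms(4) \<Omega>_pos vG by (simp add: divide_nonpos_nonneg)
  then have "pv r (u,w) / (\<Omega> (u,w))^2 \<le> 0" using k_mono[OF assms(1-3)] by linarith
  then show ?thesis using \<Omega>_pos assms(1)
    by (smt (verit) divide_pos_pos zero_less_power)
qed

lemma pv_earlier_nonneg:
  assumes "(u,w) \<in> G" "v0 \<le> v" "v \<le> w" "pv r (u,w) \<ge> 0"
  shows "pv r (u,v) \<ge> 0"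
proof -
  have vG: "(u,v) \<in> G" using seg[of u w u v] assms inK by auto
  have "pv r (u,w) / (\<Omega> (u,w))^2 \<ge> 0" using assms(4) \<Omega>_pos assms(1) by simp
  then have "pv r (u,v) / (\<Omega> (u,v))^2 \<ge> 0" using k_mono[OF assms(1-3)] by linarith
  then show ?thesis using \<Omega>_pos vG
    by (smt (verit) divide_neg_pos zero_less_power)
qed

lemma r_u_mono:
  assumes "(u,v) \<in> G" "0 \<le> s" "s \<le> u"
  shows "r (u,v) \<le> r (s,v)"
proof (rule DERIV_nonpos_imp_nonincreasing[OF assms(3), of "\<lambda>x. r (x,v)"])
  fix x assume x: "s \<le> x" "x \<le> u"
  have xG: "(x,v) \<in> G" using seg[of u v x v] assms inK x by auto
  show "\<exists>y. ((\<lambda>x. r (x,v)) has_real_derivative y) (at x) \<and> y \<le> 0"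
    using Cinf_du0[OF CR inU[OF xG]] pu_neg[OF xG] by force
qed

lemma r_v_mono:
  assumes "(u,w) \<in> G" "v0 \<le> v" "v \<le> w" "pv r (u,w) \<ge> 0"
  shows "r (u,v) \<le> r (u,w)"
proof (rule DERIV_nonneg_imp_nondecreasing[OF assms(3), of "\<lambda>t. r (u,t)"])
  fix x assume x: "v \<le> x" "x \<le> w"
  have xG: "(u,x) \<in> G" using seg[of u w u x] assms inK x by auto
  have "pv r (u,x) \<ge> 0" using pv_earlier_nonneg[OF assms(1) _ x(2) assms(4)] x assms by auto
  then show "\<exists>y. ((\<lambda>t. r (u,t)) has_real_derivative y) (at x) \<and> 0 \<le> y"
    using Cinf_dv0[OF CR inU[OF xG]] by force
qed

end


context setting begin

definition S where "S = regA G r \<inter> W_set G r \<rho> \<delta>"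

lemma S_iff: "p \<in> S \<longleftrightarrow> p \<in> G \<and> pv r p = 0 \<and> r p \<ge> \<rho> - \<delta>"
  unfolding S_def regA_def W_set_def using pu_neg[of p] by auto

lemma dS:
  assumes "(u,v) \<in> S"
  shows "((\<lambda>s. pv r (s,v)) has_real_derivative pu (pv r) (u,v)) (at u) \<and> pu (pv r) (u,v) < 0"
proof -
  have pG: "(u,v) \<in> G" and Q0: "pv r (u,v) = 0" using assms S_iff by auto
  have pU: "(u,v) \<in> U" using inU[OF pG] .
  note dR = Cinf_du0[OF CR pU] and dPu = Cinf_du1[OF CR pU] and dQ = Cinf_du2[OF CR pU]
    and dO = Cinf_du0[OF CO pU]
  define R0 where "R0 = r (u,v)"
  define P where "P = pu r (u,v)"
  define Dd where "Dd = pu (pv r) (u,v)"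
  define Om where "Om = \<Omega> (u,v)"
  have Opos: "Om > 0" using \<Omega>_pos pG Om_def by auto
  have Pneg: "P < 0" using pu_neg[OF pG] P_def by simp
  obtain E where dE: "((\<lambda>s. 4 / (\<Omega> (s,v))^2) has_real_derivative E) (at u)"
    using DERIV_divide[OF DERIV_const[of 4] DERIV_power[OF dO, of 2]] Opos Om_def by fastforce
  have dF: "((\<lambda>s. 4 / (\<Omega> (s,v))^2 * pu r (s,v) * pv r (s,v)) has_real_derivative
       Dd * (4 / Om^2 * P)) (at u)"
    using DERIV_mult[OF DERIV_mult[OF dE dPu] dQ] Q0 unfolding Dd_def Om_def P_def by simp
  have dM: "((\<lambda>s. hawking_mass \<Omega> r (s,v)) has_real_derivative
        P / 2 + Dd * (4 / Om^2 * P) * (R0 / 2)) (at u)"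
    unfolding hawking_mass_def
    using DERIV_mult[OF DERIV_cdivide[OF dR, of 2] DERIV_add[OF DERIV_const[of 1] dF]] Q0
    unfolding R0_def P_def by simp
  have "pu (hawking_mass \<Omega> r) (u,v) = P / 2 + Dd * (4 / Om^2 * P) * (R0 / 2)"
    using DERIV_imp_deriv[OF dM] unfolding pu_def by simp
  then have eq: "P / 2 + Dd * (4 / Om^2 * P) * (R0 / 2) = 2 * R0^2 / Om^2 * (Tuv (u,v) * P)"
    using eq_mu pG Q0 unfolding R0_def Om_def P_def by auto
  have R0nn: "R0 \<ge> 0" using r_nonneg pG R0_def by auto
  have Ac: "Tuv (u,v) / Om^2 < 1 / (4 * R0^2)"
    using A_cond assms unfolding S_def R0_def Om_def by auto
  have R0pos: "R0 > 0"
  proof (rule ccontr)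
    assume "\<not> R0 > 0" then have "R0 = 0" using R0nn by simp
    then have "Tuv (u,v) / Om^2 < 0" using Ac by simp
    moreover have "Tuv (u,v) \<ge> 0" using I pG by auto
    ultimately show False using Opos by (simp add: divide_less_0_iff)
  qed
  have "2 * R0^2 * (Tuv (u,v) / Om^2) < 1/2"
  proof -
    have "2 * R0^2 * (Tuv (u,v) / Om^2) < 2 * R0^2 * (1 / (4 * R0^2))"
      using Ac R0pos by (intro mult_strict_left_mono) auto
    also have "\<dots> = 1/2" using R0pos by (simp add: field_simps)
    finally show ?thesis .
  qed
  moreover have "P / 2 + Dd * (4 / Om^2 * P) * (R0 / 2) = P * (1/2 + 2 * R0 * Dd / Om^2)"
    by (simp add: field_simps)
  moreover have "2 * R0^2 / Om^2 * (Tuv (u,v) * P) = P * (2 * R0^2 * (Tuv (u,v) / Om^2))"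
    by (simp add: field_simps)
  ultimately have "P * (1/2 + 2 * R0 * Dd / Om^2) = P * (2 * R0^2 * (Tuv (u,v) / Om^2))"
    using eq by metis
  then have "1/2 + 2 * R0 * Dd / Om^2 = 2 * R0^2 * (Tuv (u,v) / Om^2)"
    using Pneg mult_left_cancel[of P] by (metis less_irrefl)
  then have "2 * R0 * Dd / Om^2 < 0"
    using \<open>2 * R0^2 * (Tuv (u,v) / Om^2) < 1/2\<close> by linarith
  then have "Dd < 0" using R0pos Opos
    by (smt (verit, ccfv_SIG) divide_nonneg_pos mult_nonneg_nonneg zero_less_power)
  then show ?thesis using dQ Dd_def by simp
qed

end



lemma no_early_zero:
  fixes f :: "real \<Rightarrow> real"
  assumes cont: "\<forall>x. a \<le> x \<and> x \<le> b \<longrightarrow> isCont f x"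
    and zeros: "\<forall>x. a \<le> x \<and> x \<le> b \<and> f x = 0 \<longrightarrow> (\<exists>D. (f has_real_derivative D) (at x) \<and> D < 0)"
    and fb: "f b = 0" and ab: "a \<le> b"
  shows "\<forall>x. a \<le> x \<and> x < b \<longrightarrow> f x > 0"
proof (rule ccontr)
  assume "\<not> ?thesis"
  then obtain s where s: "a \<le> s" "s < b" "f s \<le> 0" by force
  define M where "M = {x. a \<le> x \<and> x < b \<and> f x \<le> 0}"
  have sM: "s \<in> M" using s M_def by auto
  obtain D where D: "(f has_real_derivative D) (at b)" "D < 0" using zeros fb ab by auto
  obtain d where d: "d > 0" "\<forall>h>0. h < d \<longrightarrow> f b < f (b - h)"
    using DERIV_neg_dec_left[OF D] by blast
  have Mle: "\<forall>x\<in>M. x \<le> b - d"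
  proof
    fix x assume x: "x \<in> M"
    show "x \<le> b - d"
    proof (rule ccontr)
      assume "\<not> x \<le> b - d"
      then have "b - x > 0" "b - x < d" using x M_def by auto
      then have "f b < f (b - (b - x))" using d by blast
      then show False using x M_def fb by auto
    qed
  qed
  have bdd: "bdd_above M" using Mle by (auto intro: bdd_aboveI)
  define w where "w = Sup M"
  have ws: "s \<le> w" using cSup_upper[OF sM bdd] w_def by simp
  have wle: "w \<le> b - d" using cSup_least[of M "b - d"] sM Mle w_def by auto
  have wa: "a \<le> w" "w < b" using ws s wle d by auto
  have cw: "isCont f w" using cont wa by auto
  have fw: "f w \<le> 0"
  proof (rule ccontr)
    assume "\<not> f w \<le> 0"
    then have pos: "f w > 0" by simp
    obtain e where e: "e > 0" "\<forall>x. dist x w < e \<longrightarrow> dist (f x) (f w) < f w"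
      using cw[unfolded continuous_at_eps_delta] pos by blast
    obtain x where x: "x \<in> M" "w - e < x" using less_cSup_iff[of M "w - e"] sM bdd e w_def by auto
    have "x \<le> w" using cSup_upper[OF x(1) bdd] w_def by simp
    then have "dist (f x) (f w) < f w" using e x by (auto simp: dist_real_def)
    then have "f x > 0" by (auto simp: dist_real_def)
    then show False using x M_def by auto
  qed
  have "\<exists>x. w < x \<and> x < b \<and> f x \<le> 0"
  proof (cases "f w = 0")
    case True
    obtain D where D: "(f has_real_derivative D) (at w)" "D < 0" using zeros True wa by auto
    obtain d' where d': "d' > 0" "\<forall>h>0. h < d' \<longrightarrow> f (w + h) < f w"
      using DERIV_neg_dec_right[OF D] by blast
    define h where "h = min d' (b - w) / 2"
    have "h > 0" "h < d'" "w + h < b" using d' wa h_def by auto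
    then show ?thesis using d' True by (intro exI[of _ "w + h"]) force
  next
    case False
    then have neg: "f w < 0" using fw by simp
    obtain e where e: "e > 0" "\<forall>x. dist x w < e \<longrightarrow> dist (f x) (f w) < - f w"
      using cw[unfolded continuous_at_eps_delta] neg by (metis neg_0_less_iff_less)
    define h where "h = min e (b - w) / 2"
    have h: "h > 0" "h < e" "w + h < b" using e wa h_def by auto
    then have "dist (f (w + h)) (f w) < - f w" using e by (auto simp: dist_real_def)
    then have "f (w + h) < 0" by (auto simp: dist_real_def)
    then show ?thesis using h by (intro exI[of _ "w + h"]) auto
  qed
  then obtain x where x: "w < x" "x < b" "f x \<le> 0" by blast
  then have "x \<in> M" using M_def wa by auto
  then have "x \<le> w" using cSup_upper[OF _ bdd] w_def by simp
  then show False using x by simp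
qed

context setting begin

lemma S_left_pos:
  assumes "(u,v) \<in> S" "0 \<le> s" "s < u"
  shows "pv r (s,v) > 0"
proof -
  have uG: "(u,v) \<in> G" using assms S_iff by auto
  have v0v: "v0 \<le> v" using inK uG by auto
  have segG: "\<And>x. 0 \<le> x \<Longrightarrow> x \<le> u \<Longrightarrow> (x,v) \<in> G" using seg[OF uG] v0v by auto
  have "\<forall>x. 0 \<le> x \<and> x < u \<longrightarrow> (\<lambda>s. pv r (s,v)) x > 0"
  proof (rule no_early_zero)
    show "\<forall>x. 0 \<le> x \<and> x \<le> u \<longrightarrow> isCont (\<lambda>s. pv r (s, v)) x"
    proof (intro allI impI)
      fix x assume "0 \<le> x \<and> x \<le> u"
      then have "(x,v) \<in> U" using segG inU by auto
      then show "isCont (\<lambda>s. pv r (s, v)) x" using Cinf_contv[OF CR] isCont_u by blast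
    qed
    show "\<forall>x. 0 \<le> x \<and> x \<le> u \<and> pv r (x, v) = 0 \<longrightarrow>
        (\<exists>D. ((\<lambda>s. pv r (s, v)) has_real_derivative D) (at x) \<and> D < 0)"
    proof (intro allI impI)
      fix x assume x: "0 \<le> x \<and> x \<le> u \<and> pv r (x, v) = 0"
      have "r (u,v) \<le> r (x,v)" using r_u_mono[OF uG] x by auto
      then have "(x,v) \<in> S" using S_iff segG x assms(1) by force
      then show "\<exists>D. ((\<lambda>s. pv r (s, v)) has_real_derivative D) (at x) \<and> D < 0"
        using dS by blast
    qed
    show "pv r (u, v) = 0" using assms S_iff by auto
    show "0 \<le> u" using inK uG by auto
  qed
  then show ?thesis using assms by auto
qed

lemma S_unique: assumes "(u,v) \<in> S" "(u',v) \<in> S" shows "u = u'"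
proof -
  have "0 \<le> u" "0 \<le> u'" using assms S_iff inK by auto
  moreover have "pv r (u,v) = 0" "pv r (u',v) = 0" using assms S_iff by auto
  ultimately show ?thesis using S_left_pos[OF assms(1), of u'] S_left_pos[OF assms(2), of u]
    by (cases u u' rule: linorder_cases) auto
qed

lemma S_forward:
  assumes "(u,v) \<in> S" "v \<le> w" "(u,w) \<in> G" "0 \<le> a" "a \<le> u" "pv r (a,w) \<ge> 0"
  shows "\<exists>z. a \<le> z \<and> z \<le> u \<and> (z,w) \<in> S"
proof -
  have uG: "(u,v) \<in> G" using assms S_iff by auto
  have v0v: "v0 \<le> v" using inK uG by auto
  have "pv r (u,w) \<le> 0" using pv_later_nonpos[OF assms(3) v0v assms(2)] assms(1) S_iff by auto
  moreover have "\<forall>x. a \<le> x \<and> x \<le> u \<longrightarrow> isCont (\<lambda>s. pv r (s, w)) x"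
  proof (intro allI impI)
    fix x assume "a \<le> x \<and> x \<le> u"
    then have "(x,w) \<in> G" using seg[OF assms(3)] v0v assms by auto
    then have "(x,w) \<in> U" using inU by auto
    then show "isCont (\<lambda>s. pv r (s, w)) x" using Cinf_contv[OF CR] isCont_u by blast
  qed
  ultimately obtain z where z: "a \<le> z" "z \<le> u" "pv r (z,w) = 0"
    using IVT2[of "\<lambda>s. pv r (s, w)" u 0 a] assms by auto
  have zG: "(z,w) \<in> G" using seg[OF assms(3)] z assms v0v by auto
  have "r (z,v) \<le> r (z,w)" using r_v_mono[OF zG v0v assms(2)] z by simp
  moreover have "r (u,v) \<le> r (z,v)" using r_u_mono[OF uG] z assms by auto
  moreover have "r (u,v) \<ge> \<rho> - \<delta>" using assms S_iff by auto
  ultimately have "(z,w) \<in> S" using S_iff zG z by auto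
  then show ?thesis using z by auto
qed

end


context setting begin

definition D where "D = snd ` S"
definition gam where "gam t = (THE s. (s,t) \<in> S)"

lemma gam_eq: "(u,t) \<in> S \<Longrightarrow> gam t = u"
  unfolding gam_def using S_unique by blast

lemma gam: "t \<in> D \<Longrightarrow> (gam t, t) \<in> S"
  unfolding D_def using gam_eq by force

lemma inD: "(u,t) \<in> S \<Longrightarrow> t \<in> D"
  unfolding D_def by force

lemma gamG: "t \<in> D \<Longrightarrow> (gam t, t) \<in> G" using gam S_iff by auto

lemma D_bounds: "t \<in> D \<Longrightarrow> v0 \<le> t \<and> 0 \<le> gam t \<and> gam t \<le> u0"
  using gamG inK by blast

lemma pv0_pos: "v0 \<le> t \<Longrightarrow> pv r (0,t) > 0"
  using VI by (auto simp: C_out_def)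

lemma C_outG: "v0 \<le> t \<Longrightarrow> (0,t) \<in> G"
  using G_cont by (auto simp: C_out_def)

lemma gam_mono:
  assumes "t \<in> D" "t' \<in> D" "t \<le> t'"
  shows "gam t' \<le> gam t"
proof (rule ccontr)
  assume "\<not> gam t' \<le> gam t"
  then have lt: "gam t < gam t'" by simp
  have "(gam t, t') \<in> G"
    using seg[OF gamG[OF assms(2)], of "gam t" t'] lt D_bounds[OF assms(1)] D_bounds[OF assms(2)] by auto
  then obtain z where z: "0 \<le> z" "z \<le> gam t" "(z,t') \<in> S"
    using S_forward[OF gam[OF assms(1)] assms(3), of 0] pv0_pos D_bounds[OF assms(2)] D_bounds[OF assms(1)]
    by force
  then have "z = gam t'" using gam_eq by simp
  then show False using z lt by simp
qed

lemma G_openE: "p \<in> G \<Longrightarrow> \<exists>e>0. \<forall>x\<in>Krect u0 v0. dist x p < e \<longrightarrow> x \<in> G"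
  using G_open unfolding openin_euclidean_subtopology_iff by blast

lemma step:
  assumes "t \<in> D"
  shows "\<exists>e>0. \<forall>t'. t \<le> t' \<and> t' \<le> t + e \<longrightarrow> t' \<in> D"
proof -
  obtain e where e: "e > 0" "\<forall>x\<in>Krect u0 v0. dist x (gam t, t) < e \<longrightarrow> x \<in> G"
    using G_openE[OF gamG[OF assms]] by blast
  have "\<forall>t'. t \<le> t' \<and> t' \<le> t + e/2 \<longrightarrow> t' \<in> D"
  proof (intro allI impI)
    fix t' assume t': "t \<le> t' \<and> t' \<le> t + e/2"
    have "(gam t, t') \<in> Krect u0 v0" using D_bounds[OF assms] t' by (auto simp: Krect_def)
    moreover have "dist (gam t, t') (gam t, t) < e" using t' e by (simp add: dist_v)
    ultimately have G': "(gam t, t') \<in> G" using e by blast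
    have tt: "t \<le> t'" "v0 \<le> t'" using t' D_bounds[OF assms] by auto
    have "pv r (0,t') \<ge> 0" using pv0_pos[OF tt(2)] by simp
    then obtain z where "(z,t') \<in> S"
      using S_forward[OF gam[OF assms] tt(1) G', of 0] D_bounds[OF assms] by auto
    then show "t' \<in> D" by (rule inD)
  qed
  then show ?thesis using e by (intro exI[of _ "e/2"]) auto
qed

lemma inR: "t \<in> D \<Longrightarrow> 0 \<le> s \<Longrightarrow> s < gam t \<Longrightarrow> (s,t) \<in> regR G r"
proof -
  assume a: "t \<in> D" "0 \<le> s" "s < gam t"
  have sG: "(s,t) \<in> G" using seg[OF gamG[OF a(1)], of s t] a D_bounds[OF a(1)] by auto
  show ?thesis using S_left_pos[OF gam[OF a(1)] a(2,3)] pu_neg[OF sG] sG by (simp add: regR_def)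
qed

lemma S_A: "p \<in> S \<Longrightarrow> p \<in> regA G r" unfolding S_def by auto

lemma lim_nonneg:
  assumes "(s,b) \<in> U" "a < b" "\<forall>t. a < t \<and> t < b \<longrightarrow> pv r (s,t) > 0"
  shows "pv r (s,b) \<ge> 0"
proof -
  have "isCont (\<lambda>t. pv r (s,t)) b" using isCont_v Cinf_contv[OF CR assms(1)] by blast
  then have "((\<lambda>t. pv r (s,t)) \<longlongrightarrow> pv r (s,b)) (at_left b)"
    unfolding isCont_def by (rule tendsto_mono[OF at_le, rotated]) simp
  moreover have "\<forall>\<^sub>F t in at_left b. 0 \<le> pv r (s,t)"
    using eventually_at_left_real[OF assms(2)] by eventually_elim (use assms(3) in force)
  ultimately show ?thesis using tendsto_lowerbound trivial_limit_at_left_real by blast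
qed

lemma VII_step:
  assumes t0: "t0 < vb" "t0 \<in> D"
    and hyp: "\<forall>t. t0 \<le> t \<and> t < vb \<longrightarrow> t \<in> D \<and> ub \<le> gam t"
    and s1: "0 < s1" "s1 \<le> ub"
    and line: "\<forall>s. 0 \<le> s \<and> s < s1 \<longrightarrow> (s,vb) \<in> G"
  shows "(s1,vb) \<in> G"
proof -
  have ubu0: "ub \<le> u0" using hyp t0 D_bounds[OF t0(2)] by force
  have v0t0: "v0 \<le> t0" using D_bounds[OF t0(2)] by simp
  define p where "p = (s1, vb)"
  define q where "q = (s1/2, t0)"
  have qR: "q \<in> regR G r" unfolding q_def using inR[OF t0(2)] hyp t0 s1 by force
  have pK: "p \<in> Krect u0 v0" unfolding p_def Krect_def using s1 ubu0 v0t0 t0 by auto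
  have qK: "q \<in> Krect u0 v0" unfolding q_def Krect_def using s1 ubu0 v0t0 t0 by auto
  have qI: "q \<in> I_minus u0 v0 p" unfolding I_minus_def p_def using qK q_def s1 t0 by auto
  define c where "c = min (s1/2) ((vb - t0)/2)"
  have c: "c > 0" "c \<le> s1/2" "c \<le> (vb - t0)/2" using s1 t0 unfolding c_def by (auto simp: min_def)
  define x where "x = (\<lambda>n. (s1 - c * inverse (real (Suc n)), vb - c * inverse (real (Suc n))))"
  have xR: "x n \<in> regR G r" for n
  proof -
    define a where "a = c * inverse (real (Suc n))"
    have i: "0 < inverse (real (Suc n))" "inverse (real (Suc n)) \<le> 1"
      by (auto simp del: of_nat_Suc intro: inverse_le_1_iff[THEN iffD2])
    have a: "0 < a" "a \<le> c" unfolding a_def using c i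
      by (auto intro: mult_right_le_one_le)
    have "t0 \<le> vb - a" "vb - a < vb" using a c by auto
    then have "vb - a \<in> D" "ub \<le> gam (vb - a)" using hyp by auto
    moreover have "0 \<le> s1 - a" "s1 - a < gam (vb - a)" using a c s1 calculation by auto
    ultimately show ?thesis unfolding x_def a_def[symmetric] using inR by auto
  qed
  have "x \<longlonglongrightarrow> p" unfolding x_def p_def
    by (intro tendsto_intros tendsto_eq_intros LIMSEQ_inverse_real_of_nat tendsto_mult_right_zero
        tendsto_diff[of _ _ _ _ 0, simplified]) 
  then have pcl: "p \<in> closure (regR G r)" using xR closure_sequential by blast
  have diam: "(J_minus u0 v0 p \<inter> J_plus u0 v0 q) - {p} \<subseteq> regR G r \<union> regA G r"
  proof
    fix y assume y: "y \<in> (J_minus u0 v0 p \<inter> J_plus u0 v0 q) - {p}"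
    obtain a b where ab: "y = (a,b)" by force
    have a: "s1/2 \<le> a" "a \<le> s1" "t0 \<le> b" "b \<le> vb" "(a,b) \<noteq> (s1,vb)"
      using y ab unfolding J_minus_def J_plus_def p_def q_def by auto
    show "y \<in> regR G r \<union> regA G r"
    proof (cases "b < vb")
      case True
      then have bD: "b \<in> D" "ub \<le> gam b" using hyp a by auto
      show ?thesis
      proof (cases "a < gam b")
        case True then show ?thesis using inR[OF bD(1)] a s1 ab by auto
      next
        case False
        then have "a = gam b" using bD s1 a by auto
        then show ?thesis using S_A[OF gam[OF bD(1)]] ab by auto
      qed
    next
      case False
      then have b: "b = vb" "a < s1" using a by auto
      have aG: "(a,vb) \<in> G" using line a s1 b by auto
      have "pv r (a,vb) \<ge> 0"
      proof (rule lim_nonneg[OF inU[OF aG] t0(1)], intro allI impI)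
        fix t assume t: "t0 < t \<and> t < vb"
        then have "t \<in> D" "ub \<le> gam t" using hyp by auto
        then show "pv r (a,t) > 0" using S_left_pos[OF gam, of t a] a s1 b by auto
      qed
      then show ?thesis using aG pu_neg[OF aG] ab b by (auto simp: regR_def regA_def)
    qed
  qed
  have "p \<in> regR G r \<union> regA G r"
    using VII pcl pK qR qK qI diam closure_subset by blast
  then show ?thesis unfolding p_def regR_def regA_def by auto
qed

end


context setting begin

lemma S_limit:
  assumes v: "v < vb" "v \<in> D"
    and hyp: "\<forall>t. v \<le> t \<and> t < vb \<longrightarrow> t \<in> D \<and> ub \<le> gam t"
    and appr: "\<forall>\<epsilon>>0. \<exists>t1. v \<le> t1 \<and> t1 < vb \<and> gam t1 < ub + \<epsilon>"
    and pG: "(ub,vb) \<in> G"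
  shows "(ub,vb) \<in> S"
proof -
  have "(gam \<longlongrightarrow> ub) (at_left vb)"
  proof (rule tendstoI)
    fix e :: real assume e: "e > 0"
    obtain t1 where t1: "v \<le> t1" "t1 < vb" "gam t1 < ub + e" using appr e by blast
    show "\<forall>\<^sub>F t in at_left vb. dist (gam t) ub < e"
      using eventually_at_left_real[OF t1(2)]
    proof eventually_elim
      case (elim t)
      then have tD: "t \<in> D" "ub \<le> gam t" using hyp t1 by auto
      have "gam t \<le> gam t1" using gam_mono[of t1 t] tD t1 hyp elim by auto
      then show ?case using tD t1 by (auto simp: dist_real_def)
    qed
  qed
  then have lim: "((\<lambda>t. (gam t, t)) \<longlongrightarrow> (ub,vb)) (at_left vb)"
    by (intro tendsto_Pair tendsto_ident_at)
  have ev: "\<forall>\<^sub>F t in at_left vb. (gam t, t) \<in> S"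
    using eventually_at_left_real[OF v(1)] by eventually_elim (use hyp gam in auto)
  have l1: "((\<lambda>t. pv r (gam t, t)) \<longlongrightarrow> pv r (ub,vb)) (at_left vb)"
    using isCont_tendsto_compose[OF Cinf_contv[OF CR inU[OF pG]] lim] .
  have l2: "((\<lambda>t. r (gam t, t)) \<longlongrightarrow> r (ub,vb)) (at_left vb)"
    using isCont_tendsto_compose[OF Cinf_cont0[OF CR inU[OF pG]] lim] .
  have "pv r (ub,vb) \<le> 0"
    by (rule tendsto_upperbound[OF l1 _ trivial_limit_at_left_real])
       (use ev in eventually_elim, use S_iff in auto)
  moreover have "pv r (ub,vb) \<ge> 0"
    by (rule tendsto_lowerbound[OF l1 _ trivial_limit_at_left_real])
       (use ev in eventually_elim, use S_iff in auto)
  moreover have "r (ub,vb) \<ge> \<rho> - \<delta>"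
    by (rule tendsto_lowerbound[OF l2 _ trivial_limit_at_left_real])
       (use ev in eventually_elim, use S_iff in auto)
  ultimately show ?thesis using S_iff pG by auto
qed

lemma extend:
  assumes vD: "v \<in> D" and vw: "v \<le> w"
  shows "w \<in> D"
proof (rule ccontr)
  assume wD: "w \<notin> D"
  define B where "B = {b. v \<le> b \<and> (\<forall>t. v \<le> t \<and> t \<le> b \<longrightarrow> t \<in> D)}"
  have vB: "v \<in> B" using vD B_def by auto
  have Bw: "\<forall>b\<in>B. b < w" using wD vw unfolding B_def by force
  have bdd: "bdd_above B" using Bw by (meson bdd_above.I less_imp_le)
  define vb where "vb = Sup B"
  have below: "\<forall>t. v \<le> t \<and> t < vb \<longrightarrow> t \<in> D"
  proof (intro allI impI)
    fix t assume t: "v \<le> t \<and> t < vb"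
    then obtain b where "b \<in> B" "t < b" using less_cSup_iff[of B t] vB bdd vb_def by auto
    then show "t \<in> D" using t B_def by auto
  qed
  obtain e where e: "e > 0" "\<forall>t'. v \<le> t' \<and> t' \<le> v + e \<longrightarrow> t' \<in> D" using step[OF vD] by blast
  have "v + e \<in> B" using e B_def by auto
  then have vvb: "v < vb" using cSup_upper[OF _ bdd] e vb_def by force
  define T where "T = gam ` {v..<vb}"
  have Tne: "T \<noteq> {}" using vvb T_def by auto
  have Tbdd: "bdd_below T" unfolding T_def using below D_bounds by (intro bdd_belowI[of _ 0]) auto
  define ub where "ub = Inf T"
  have hyp: "\<forall>t. v \<le> t \<and> t < vb \<longrightarrow> t \<in> D \<and> ub \<le> gam t"
    using below cInf_lower[OF _ Tbdd] T_def ub_def by auto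
  have ub0: "0 \<le> ub" unfolding ub_def T_def using below D_bounds vvb
    by (intro cInf_greatest) auto
  have ubu0: "ub \<le> u0" using hyp vvb D_bounds[OF vD] by force
  have v0vb: "v0 \<le> vb" using D_bounds[OF vD] vvb by auto
  have appr: "\<forall>\<epsilon>>0. \<exists>t1. v \<le> t1 \<and> t1 < vb \<and> gam t1 < ub + \<epsilon>"
  proof (intro allI impI)
    fix \<epsilon> :: real assume "\<epsilon> > 0"
    then have "Inf T < ub + \<epsilon>" using ub_def by simp
    then obtain x where "x \<in> T" "x < ub + \<epsilon>" using cInf_less_iff[OF Tne Tbdd] by blast
    then show "\<exists>t1. v \<le> t1 \<and> t1 < vb \<and> gam t1 < ub + \<epsilon>" unfolding T_def by auto
  qed
  have pG: "(ub,vb) \<in> G"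
  proof (rule ccontr)
    assume nG: "(ub,vb) \<notin> G"
    define N where "N = {s. 0 \<le> s \<and> s \<le> ub \<and> (s,vb) \<notin> G}"
    have Nne: "N \<noteq> {}" using nG ub0 N_def by auto
    have Nbdd: "bdd_below N" unfolding N_def by (intro bdd_belowI[of _ 0]) auto
    define s1 where "s1 = Inf N"
    have s1: "0 \<le> s1" "s1 \<le> ub" unfolding s1_def
      using cInf_greatest[OF Nne, of 0] cInf_lower[OF _ Nbdd, of ub] nG ub0 N_def by auto
    have line: "\<forall>s. 0 \<le> s \<and> s < s1 \<longrightarrow> (s,vb) \<in> G"
    proof (intro allI impI)
      fix s assume s: "0 \<le> s \<and> s < s1"
      show "(s,vb) \<in> G"
      proof (rule ccontr)
        assume "(s,vb) \<notin> G"
        then have "s \<in> N" using s s1 N_def by auto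
        then have "s1 \<le> s" using cInf_lower[OF _ Nbdd] s1_def by auto
        then show False using s by simp
      qed
    qed
    have s1G: "(s1,vb) \<in> G"
    proof (cases "s1 = 0")
      case True then show ?thesis using C_outG[OF v0vb] by simp
    next
      case False
      then show ?thesis using VII_step[OF vvb vD hyp _ s1(2) line] s1 by auto
    qed
    obtain e where e: "e > 0" "\<forall>x\<in>Krect u0 v0. dist x (s1,vb) < e \<longrightarrow> x \<in> G"
      using G_openE[OF s1G] by blast
    have "\<forall>n\<in>N. s1 + e \<le> n"
    proof
      fix n assume n: "n \<in> N"
      have "s1 \<le> n" using cInf_lower[OF n Nbdd] s1_def by simp
      show "s1 + e \<le> n"
      proof (rule ccontr)
        assume "\<not> s1 + e \<le> n"
        then have "dist (n,vb) (s1,vb) < e" using \<open>s1 \<le> n\<close> by (simp add: dist_u)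
        moreover have "(n,vb) \<in> Krect u0 v0" using n N_def ubu0 v0vb by (auto simp: Krect_def)
        ultimately have "(n,vb) \<in> G" using e by blast
        then show False using n N_def by auto
      qed
    qed
    then have "s1 + e \<le> Inf N" using cInf_greatest[OF Nne, of "s1 + e"] by blast
    then have "s1 + e \<le> s1" using s1_def by simp
    then show False using e by simp
  qed
  have "(ub,vb) \<in> S" using S_limit[OF vvb vD hyp appr pG] .
  then have vbD: "vb \<in> D" by (rule inD)
  obtain e' where e': "e' > 0" "\<forall>t'. vb \<le> t' \<and> t' \<le> vb + e' \<longrightarrow> t' \<in> D" using step[OF vbD] by blast
  have "vb + e' \<in> B" unfolding B_def
  proof (intro CollectI conjI allI impI)
    show "v \<le> vb + e'" using vvb e' by simp
    fix t assume "v \<le> t \<and> t \<le> vb + e'"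
    then show "t \<in> D" using below e' by (cases "t < vb") auto
  qed
  then have "vb + e' \<le> Sup B" using cSup_upper[OF _ bdd] by blast
  then have "vb + e' \<le> vb" using vb_def by simp
  then show False using e' by simp
qed

end


context setting begin

lemma sign_v_pos:
  assumes "(a,t) \<in> U" "pv r (a,t) > 0"
  shows "\<exists>d>0. \<forall>t'. \<bar>t' - t\<bar> < d \<longrightarrow> pv r (a,t') > 0"
proof -
  have "isCont (\<lambda>t. pv r (a,t)) t" using isCont_v Cinf_contv[OF CR assms(1)] by blast
  then obtain d where d: "d > 0" "\<forall>x. dist x t < d \<longrightarrow> dist (pv r (a,x)) (pv r (a,t)) < pv r (a,t)"
    using assms(2) unfolding continuous_at_eps_delta by blast
  show ?thesis using d by (intro exI[of _ d]) (auto simp: dist_real_def)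
qed

lemma sign_v_neg:
  assumes "(a,t) \<in> U" "pv r (a,t) < 0"
  shows "\<exists>d>0. \<forall>t'. \<bar>t' - t\<bar> < d \<longrightarrow> pv r (a,t') < 0"
proof -
  have "isCont (\<lambda>t. pv r (a,t)) t" using isCont_v Cinf_contv[OF CR assms(1)] by blast
  then obtain d where d: "d > 0" "\<forall>x. dist x t < d \<longrightarrow> dist (pv r (a,x)) (pv r (a,t)) < - pv r (a,t)"
    using assms(2) unfolding continuous_at_eps_delta by (metis neg_0_less_iff_less)
  show ?thesis using d by (intro exI[of _ d]) (auto simp: dist_real_def)
qed

lemma gam_right:
  assumes tD: "t \<in> D" and e: "\<epsilon> > 0"
  shows "\<exists>d>0. \<forall>t'\<in>D. t \<le> t' \<and> t' < t + d \<longrightarrow> gam t - \<epsilon> < gam t'"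
proof (cases "gam t \<le> \<epsilon>/2")
  case True
  then show ?thesis using D_bounds e by (intro exI[of _ 1]) force
next
  case False
  define u where "u = gam t"
  define a where "a = u - \<epsilon>/2"
  have a: "0 < a" "a < u" using False e a_def u_def by auto
  have S0: "(u,t) \<in> S" using gam[OF tD] u_def by simp
  have pa: "pv r (a,t) > 0" using S_left_pos[OF gam[OF tD]] a u_def by auto
  have aG: "(a,t) \<in> G" using seg[OF gamG[OF tD], of a t] a u_def D_bounds[OF tD] by auto
  obtain d1 where d1: "d1 > 0" "\<forall>t'. \<bar>t' - t\<bar> < d1 \<longrightarrow> pv r (a,t') > 0"
    using sign_v_pos[OF inU[OF aG] pa] by blast
  obtain e2 where e2: "e2 > 0" "\<forall>x\<in>Krect u0 v0. dist x (u,t) < e2 \<longrightarrow> x \<in> G"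
    using G_openE[OF gamG[OF tD]] u_def by auto
  show ?thesis
  proof (intro exI[of _ "min d1 e2"] conjI ballI impI)
    show "min d1 e2 > 0" using d1 e2 by simp
    fix t' assume t'D: "t' \<in> D" and t': "t \<le> t' \<and> t' < t + min d1 e2"
    have "(u,t') \<in> Krect u0 v0" using D_bounds[OF tD] t' u_def by (auto simp: Krect_def)
    have "t' - t < e2" using t' min.cobounded2[of d1 e2] by linarith
    then have "dist (u,t') (u,t) < e2" using t' by (simp add: dist_v)
    moreover note \<open>(u,t') \<in> Krect u0 v0\<close>
    ultimately have uG: "(u,t') \<in> G" using e2 by blast
    have "\<bar>t' - t\<bar> < d1" using t' min.cobounded1[of d1 e2] by linarith
    then have "pv r (a,t') \<ge> 0" using d1 by fastforce
    then obtain z where z: "a \<le> z" "z \<le> u" "(z,t') \<in> S"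
      using S_forward[OF S0 _ uG, of a] t' a by force
    then have "gam t' = z" using gam_eq by simp
    then show "gam t - \<epsilon> < gam t'" using z a_def u_def e by simp
  qed
qed

lemma gam_left:
  assumes tD: "t \<in> D" and e: "\<epsilon> > 0"
  shows "\<exists>d>0. \<forall>t'\<in>D. t - d < t' \<and> t' \<le> t \<longrightarrow> gam t' < gam t + \<epsilon>"
proof -
  define u where "u = gam t"
  have S0: "(u,t) \<in> S" using gam[OF tD] u_def by simp
  have dd: "((\<lambda>s. pv r (s,t)) has_real_derivative pu (pv r) (u,t)) (at u)" "pu (pv r) (u,t) < 0"
    using dS[OF S0] by auto
  obtain d where d: "d > 0" "\<forall>h>0. h < d \<longrightarrow> pv r (u + h, t) < pv r (u,t)"
    using DERIV_neg_dec_right[OF dd] by blast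
  have uU: "(u,t) \<in> U" using inU S0 S_iff by auto
  obtain eU where eU: "eU > 0" "ball (u,t) eU \<subseteq> U" using U_open uU open_contains_ball by blast
  define h where "h = min d (min eU \<epsilon>) / 2"
  have h: "0 < h" "h < d" "h < eU" "h < \<epsilon>" using d eU e h_def by auto
  have bU: "(u + h, t) \<in> U" using eU h by (auto simp: dist_u)
  have neg: "pv r (u + h, t) < 0" using d h S0 S_iff by force
  obtain d2 where d2: "d2 > 0" "\<forall>t'. \<bar>t' - t\<bar> < d2 \<longrightarrow> pv r (u + h, t') < 0"
    using sign_v_neg[OF bU neg] by blast
  show ?thesis
  proof (intro exI[of _ d2] conjI ballI impI)
    show "d2 > 0" using d2 by simp
    fix t' assume t'D: "t' \<in> D" and t': "t - d2 < t' \<and> t' \<le> t"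
    have "\<not> u + h < gam t'"
    proof
      assume "u + h < gam t'"
      then have "pv r (u + h, t') > 0" using S_left_pos[OF gam[OF t'D]] h D_bounds[OF tD] u_def by auto
      moreover have "pv r (u + h, t') < 0" using d2 t' by auto
      ultimately show False by simp
    qed
    then show "gam t' < gam t + \<epsilon>" using h u_def by simp
  qed
qed

lemma gam_cont: "continuous_on D gam"
  unfolding continuous_on_iff
proof (intro ballI allI impI)
  fix t and \<epsilon> :: real assume tD: "t \<in> D" and e: "\<epsilon> > 0"
  obtain d1 where d1: "d1 > 0" "\<forall>t'\<in>D. t \<le> t' \<and> t' < t + d1 \<longrightarrow> gam t - \<epsilon> < gam t'"
    using gam_right[OF tD e] by blast
  obtain d2 where d2: "d2 > 0" "\<forall>t'\<in>D. t - d2 < t' \<and> t' \<le> t \<longrightarrow> gam t' < gam t + \<epsilon>"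
    using gam_left[OF tD e] by blast
  show "\<exists>d>0. \<forall>t'\<in>D. dist t' t < d \<longrightarrow> dist (gam t') (gam t) < \<epsilon>"
  proof (intro exI[of _ "min d1 d2"] conjI ballI impI)
    show "min d1 d2 > 0" using d1 d2 by simp
    fix t' assume t'D: "t' \<in> D" and dt: "dist t' t < min d1 d2"
    show "dist (gam t') (gam t) < \<epsilon>"
    proof (cases "t \<le> t'")
      case True
      then have "gam t' \<le> gam t" using gam_mono tD t'D by auto
      moreover have "gam t - \<epsilon> < gam t'" using d1 t'D True dt by (auto simp: dist_real_def)
      ultimately show ?thesis using e by (simp add: dist_real_def)
    next
      case False
      then have "gam t \<le> gam t'" using gam_mono tD t'D by auto
      moreover have "gam t' < gam t + \<epsilon>" using d2 t'D False dt by (auto simp: dist_real_def)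
      ultimately show ?thesis using e by (simp add: dist_real_def)
    qed
  qed
qed

lemma S_image: "S = (\<lambda>t. (gam t, t)) ` D"
proof
  show "S \<subseteq> (\<lambda>t. (gam t, t)) ` D"
  proof
    fix p assume p: "p \<in> S"
    obtain u t where ut: "p = (u,t)" by force
    then have "t \<in> D" "gam t = u" using p inD gam_eq by auto
    then show "p \<in> (\<lambda>t. (gam t, t)) ` D" using ut by force
  qed
  show "(\<lambda>t. (gam t, t)) ` D \<subseteq> S" using gam by auto
qed

lemma S_connected: "connected S"
proof -
  have "is_interval D" unfolding is_interval_1 using extend by blast
  then have "connected D" by (rule is_interval_connected)
  moreover have "continuous_on D (\<lambda>t. (gam t, t))"
    by (intro continuous_on_Pair gam_cont continuous_on_id)
  ultimately show ?thesis using S_image connected_continuous_image by metis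
qed

lemma main:
  assumes ne: "S \<noteq> {}"
  shows "connected S \<and>
         ((terminates_at S 0 \<and> asymptotic_to_EH S)
          \<or>
          (\<exists>ustar. 0 < ustar \<and> ustar \<le> u0 \<and> terminates_at S ustar \<and>
             (\<exists>u1 v1. 0 < u1 \<and> u1 \<le> u0 \<and> v0 \<le> v1 \<and>
                Krect u1 v1 \<subseteq> W_set G r \<rho> \<delta> \<inter> regR G r)))"
proof -
  obtain d0 where d0: "d0 \<in> D" using ne D_def by auto
  define T where "T = gam ` D"
  have Tne: "T \<noteq> {}" using d0 T_def by auto
  have Tbdd: "bdd_below T" unfolding T_def using D_bounds by (intro bdd_belowI[of _ 0]) auto
  define us where "us = Inf T"
  have usle: "\<And>t. t \<in> D \<Longrightarrow> us \<le> gam t" using cInf_lower[OF _ Tbdd] T_def us_def by auto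
  have us0: "0 \<le> us" unfolding us_def T_def using d0 D_bounds by (intro cInf_greatest) auto
  have appr: "\<forall>\<epsilon>>0. \<exists>t1\<in>D. gam t1 < us + \<epsilon>"
  proof (intro allI impI)
    fix \<epsilon> :: real assume "\<epsilon> > 0"
    then have "Inf T < us + \<epsilon>" using us_def by simp
    then obtain x where "x \<in> T" "x < us + \<epsilon>" using cInf_less_iff[OF Tne Tbdd] by blast
    then show "\<exists>t1\<in>D. gam t1 < us + \<epsilon>" unfolding T_def by auto
  qed
  have trm: "terminates_at S us"
    unfolding terminates_at_def
  proof (intro conjI allI impI)
    fix V :: real
    have "max V d0 \<in> D" using extend[OF d0] by simp
    then show "\<exists>p\<in>S. V \<le> snd p" using gam by force
  next
    fix \<epsilon> :: real assume e: "\<epsilon> > 0"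
    obtain t1 where t1: "t1 \<in> D" "gam t1 < us + \<epsilon>" using appr e by blast
    show "\<exists>V. \<forall>p\<in>S. V \<le> snd p \<longrightarrow> \<bar>fst p - us\<bar> < \<epsilon>"
    proof (intro exI[of _ t1] ballI impI)
      fix p assume p: "p \<in> S" "t1 \<le> snd p"
      obtain u t where ut: "p = (u,t)" by force
      have tD: "t \<in> D" and gu: "gam t = u" using p ut inD gam_eq by auto
      have "gam t \<le> gam t1" using gam_mono[OF t1(1) tD] p ut by simp
      moreover have "us \<le> gam t" using usle[OF tD] .
      ultimately show "\<bar>fst p - us\<bar> < \<epsilon>" using ut gu t1 by simp
    qed
  qed
  show ?thesis
  proof (cases "us = 0")
    case True
    have "asymptotic_to_EH S" unfolding asymptotic_to_EH_def
    proof (intro allI impI)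
      fix \<epsilon> :: real and V :: real assume e: "\<epsilon> > 0"
      obtain t1 where t1: "t1 \<in> D" "gam t1 < \<epsilon>" using appr e True by force
      define t where "t = max t1 (V + 1)"
      have tD: "t \<in> D" using extend[OF t1(1)] t_def by simp
      have "gam t \<le> gam t1" using gam_mono[OF t1(1) tD] t_def by simp
      then show "\<exists>p\<in>S. fst p < \<epsilon> \<and> V < snd p"
        using gam[OF tD] t1 t_def by (intro bexI[of _ "(gam t, t)"]) auto
    qed
    then show ?thesis using S_connected trm True by auto
  next
    case False
    then have uspos: "0 < us" using us0 by simp
    have usu0: "us \<le> u0" using usle[OF d0] D_bounds[OF d0] by simp
    have rect: "Krect (us/2) d0 \<subseteq> W_set G r \<rho> \<delta> \<inter> regR G r"
    proof
      fix x assume x: "x \<in> Krect (us/2) d0"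
      obtain a b where ab: "x = (a,b)" by force
      have a: "0 \<le> a" "a \<le> us/2" "d0 \<le> b" using x ab by (auto simp: Krect_def)
      have bD: "b \<in> D" using extend[OF d0 a(3)] .
      have lt: "a < gam b" using usle[OF bD] a uspos by simp
      have R: "(a,b) \<in> regR G r" using inR[OF bD a(1) lt] .
      have "r (gam b, b) \<le> r (a,b)" using r_u_mono[OF gamG[OF bD] a(1)] lt by simp
      moreover have "r (gam b, b) \<ge> \<rho> - \<delta>" using gam[OF bD] S_iff by auto
      ultimately have "(a,b) \<in> W_set G r \<rho> \<delta>" using R by (auto simp: W_set_def regR_def)
      then show "x \<in> W_set G r \<rho> \<delta> \<inter> regR G r" using R ab by simp
    qed
    have "v0 \<le> d0" using D_bounds[OF d0] by simp
    then have "\<exists>u1 v1. 0 < u1 \<and> u1 \<le> u0 \<and> v0 \<le> v1 \<and>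
                Krect u1 v1 \<subseteq> W_set G r \<rho> \<delta> \<inter> regR G r"
      using uspos usu0 rect by (intro exI[of _ "us/2"] exI[of _ d0]) auto
    then show ?thesis using S_connected trm uspos usu0 by blast
  qed
qed

end


lemma Cinf_mono: "C_inf_on U f \<Longrightarrow> open V \<Longrightarrow> V \<subseteq> U \<Longrightarrow> C_inf_on V f"
  unfolding C_inf_on_def by (auto intro: continuous_on_subset)


theorem lemma1:
  fixes u0 v0 :: real and G :: "pt set"
    and \<Omega> r Tuu Tuv Tvv :: "pt \<Rightarrow> real" and \<delta> :: real
  assumes u0: "u0 > 0" and v0: "v0 > 0"
    and G_sub: "G \<subseteq> Krect u0 v0"
    and G_open: "openin (top_of_set (Krect u0 v0)) G"
    and G_gh: "globally_hyperbolic G"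
    and G_cont: "C_in u0 v0 \<union> C_out v0 \<subseteq> G"
    and sm: "smooth_on G \<Omega>" "smooth_on G r" "smooth_on G Tuu" "smooth_on G Tuv" "smooth_on G Tvv"
    and \<Omega>_pos: "\<forall>p\<in>G. \<Omega> p > 0"
    and r_nonneg: "\<forall>p\<in>G. r p \<ge> 0"
    and r_pos: "\<forall>p\<in>C_in u0 v0 \<union> C_out v0. r p > 0"
    and eq_uu: "\<forall>p\<in>G. pu (\<lambda>q. pu r q / (\<Omega> q)^2) p = - r p * Tuu p / (\<Omega> p)^2"
    and eq_vv: "\<forall>p\<in>G. pv (\<lambda>q. pv r q / (\<Omega> q)^2) p = - r p * Tvv p / (\<Omega> p)^2"
    and eq_mu: "\<forall>p\<in>G. pu (hawking_mass \<Omega> r) p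
                   = 2 * (r p)^2 / (\<Omega> p)^2 * (Tuv p * pu r p - Tuu p * pv r p)"
    and eq_mv: "\<forall>p\<in>G. pv (hawking_mass \<Omega> r) p
                   = 2 * (r p)^2 / (\<Omega> p)^2 * (Tuv p * pv r p - Tvv p * pu r p)"
    and I: "\<forall>p\<in>G. Tuu p \<ge> 0 \<and> Tuv p \<ge> 0 \<and> Tvv p \<ge> 0"
    and II: "\<forall>p\<in>G. J_minus u0 v0 p \<subseteq> G"
    and III: "bdd_above (r ` C_out v0)"
    and IV: "\<forall>p\<in>C_out v0. hawking_mass \<Omega> r p \<ge> 0" "bdd_above (hawking_mass \<Omega> r ` C_out v0)"
    and V: "\<forall>p\<in>C_out v0. pu r p < 0"
    and VI: "\<forall>p\<in>C_out v0. pv r p > 0"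
    and VII: "\<forall>p q. p \<in> closure (regR G r) \<inter> Krect u0 v0 \<longrightarrow>
                   q \<in> closure (regR G r) \<inter> Krect u0 v0 \<inter> I_minus u0 v0 p \<longrightarrow>
                   (J_minus u0 v0 p \<inter> J_plus u0 v0 q) - {p} \<subseteq> regR G r \<union> regA G r \<longrightarrow>
                   p \<in> regR G r \<union> regA G r"
    and \<delta>_pos: "\<delta> > 0"
    and A_cond: "\<forall>p\<in>regA G r \<inter> W_set G r (Sup (r ` C_out v0)) \<delta>.
                   Tuv p / (\<Omega> p)^2 < 1 / (4 * (r p)^2)"
    and nonempty: "regA G r \<inter> W_set G r (Sup (r ` C_out v0)) \<delta> \<noteq> {}"
  shows "connected (regA G r \<inter> W_set G r (Sup (r ` C_out v0)) \<delta>) \<and>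
         ((terminates_at (regA G r \<inter> W_set G r (Sup (r ` C_out v0)) \<delta>) 0 \<and>
           asymptotic_to_EH (regA G r \<inter> W_set G r (Sup (r ` C_out v0)) \<delta>))
          \<or>
          (\<exists>ustar. 0 < ustar \<and> ustar \<le> u0 \<and>
             terminates_at (regA G r \<inter> W_set G r (Sup (r ` C_out v0)) \<delta>) ustar \<and>
             (\<exists>u1 v1. 0 < u1 \<and> u1 \<le> u0 \<and> v0 \<le> v1 \<and>
                Krect u1 v1 \<subseteq> W_set G r (Sup (r ` C_out v0)) \<delta> \<inter> regR G r)))"
  
proof -
  obtain U1 where U1: "G \<subseteq> U1" "C_inf_on U1 \<Omega>" using sm(1) unfolding smooth_on_def by blast
  obtain U2 where U2: "G \<subseteq> U2" "C_inf_on U2 r" using sm(2) unfolding smooth_on_def by blast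
  have op: "open (U1 \<inter> U2)" using U1 U2 unfolding C_inf_on_def by auto
  have c1: "C_inf_on (U1 \<inter> U2) \<Omega>" using Cinf_mono[OF U1(2) op] by blast
  have c2: "C_inf_on (U1 \<inter> U2) r" using Cinf_mono[OF U2(2) op] by blast
  interpret L: setting u0 v0 G "U1 \<inter> U2" \<Omega> r Tuu Tuv Tvv "Sup (r ` C_out v0)" \<delta>
    by unfold_locales (use G_sub G_open G_cont U1 U2 c1 c2 \<Omega>_pos r_nonneg eq_uu eq_vv eq_mu I II V VI VII A_cond in auto)
  have "L.S \<noteq> {}" using nonempty L.S_def by simp
  from L.main[OF this] show ?thesis unfolding L.S_def .
qed

end
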